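(* For every $N\in\mathbb N$, every $j_0\in\mathbb Z^d$ and every $(\varepsilon,\lambda)\in[0,\varepsilon_0]\times\Lambda$, setting $\mathtt M:=|B^0_{2,N}(j_0;\varepsilon,\lambda)|$, one has $B^0_N(j_0;\varepsilon,\lambda)\subset\bigcup_{q=1}^{2\mathtt MN^\tau}I_q$ where the $I_q$ are intervals with $|I_q|\leq N^{-\tau}$.
   Context: Setting. $d,\nu\geq1$; $|l|,|j|$ max norms, $\|j\|^2=\sum j_i^2$. $\bar\omega\in\mathbb R^\nu$, $|\bar\omega|\leq1$; $\Lambda=[1/2,3/2]$; $\tau>0$ a parameter; $\varepsilon_0>0$. $V\in C^r(\mathbb T^d;\mathbb R)$, $m$ its average, $V_0=V-m$. $f\in C^r(\mathbb T^\nu\times\mathbb T^d\times\mathbb R;\mathbb R)$, $(\varepsilon,\lambda)\mapsto u^+(\varepsilon,\lambda)\in H^s(\mathbb T^{\nu}\times\mathbb T^d;\mathbb C)$ ($s>(d+\nu)/2$), $p=f(\cdot,|u^+|^2)+f'(\cdot,|u^+|^2)|u^+|^2$, $q=f'(\cdot,|u^+|^2)(u^+)^2$ ($f'$ = derivative in the last variable). $T_1$ is the matrix of multiplication by $\begin{pmatrix}p&q\\\bar q&p\end{pmatrix}$ in the Fourier basis $e_{(l,j),a}$ ($a\in\{0,1\}$ labels the component). With $\omega=\lambda\bar\omega$, $A(\varepsilon,\lambda,\theta)=D+T_2-\varepsilon T_1+\theta Y$ (indexed by $(l,j,a)$), where $D$ is diagonal with entries $-\omega\cdot l+\|j\|^2+m$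 ($a=0$), $\omega\cdot l+\|j\|^2+m$ ($a=1$), $Y$ diagonal with entries $-1$ ($a=0$), $+1$ ($a=1$), and $T_2$ the matrix of multiplication by $V_0$ in each component. $A_{N,j_0}(\varepsilon,\lambda,\theta)$ is the (self-adjoint) restriction of $A$ to indices with $|l|\leq N$, $|j-j_0|\leq N$; $\|\cdot\|_0$ is the $L^2$ operator norm ($=+\infty$ for the inverse of a non-invertible matrix). $B^0_N(j_0;\varepsilon,\lambda):=\{\theta\in\mathbb R:\|A_{N,j_0}^{-1}(\varepsilon,\lambda,\theta)\|_0>N^\tau\}$ and $B^0_{2,N}(j_0;\varepsilon,\lambda):=\{\theta\in\mathbb R:\|A_{N,j_0}^{-1}(\varepsilon,\lambda,\theta)\|_0>N^\tau/2\}$; $|\cdot|$ denotes Lebesgue measure. *)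

theory Defs
  imports "HOL-Analysis.Analysis"
begin

definition maxnorm :: "('a::{linorder,abs})^'n \<Rightarrow> 'a" where
  "maxnorm x = Max (range (\<lambda>i. \<bar>x $ i\<bar>))"

definition sqnorm :: "(int^'n) \<Rightarrow> int" where
  "sqnorm j = (\<Sum>i\<in>UNIV. (j $ i)^2)"

definition rdot :: "(real^'n) \<Rightarrow> (int^'n) \<Rightarrow> real" where
  "rdot w l = (\<Sum>i\<in>UNIV. w $ i * of_int (l $ i))"

text \<open>Fundamental domain [0,2pi]^n of the torus T^n = (R/2piZ)^n.\<close>
definition torus_box :: "((real^'n)) set" where
  "torus_box = {x. \<forall>i. 0 \<le> x $ i \<and> x $ i \<le> 2 * pi}"

text \<open>A function on R^n is 2pi-periodic in every variable (i.e. a function on T^n).\<close>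
definition torus_periodic :: "((real^'n) \<Rightarrow> 'b) \<Rightarrow> bool" where
  "torus_periodic g \<longleftrightarrow> (\<forall>x i. g (x + (2 * pi) *\<^sub>R axis i 1) = g x)"

text \<open>Functions on T^nu x T^d x R (last variable free).\<close>
definition periodic_fun3 :: "((real^'m) \<times> (real^'n) \<times> real \<Rightarrow> 'b) \<Rightarrow> bool" where
  "periodic_fun3 g \<longleftrightarrow> (\<forall>\<phi> x t. torus_periodic (\<lambda>\<phi>'. g (\<phi>', x, t)) \<and> torus_periodic (\<lambda>x'. g (\<phi>, x', t)))"

definition periodic_fun2 :: "((real^'m) \<times> (real^'n) \<Rightarrow> 'b) \<Rightarrow> bool" where
  "periodic_fun2 g \<longleftrightarrow> (\<forall>\<phi> x. torus_periodic (\<lambda>\<phi>'. g (\<phi>', x)) \<and> torus_periodic (\<lambda>x'. g (\<phi>, x')))"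

definition torus_avg :: "((real^'n) \<Rightarrow> real) \<Rightarrow> real" where
  "torus_avg g = (LINT x : torus_box | lborel. g x) / (2 * pi) ^ CARD('n)"

definition fourier2 :: "((real^'m) \<times> (real^'n) \<Rightarrow> complex) \<Rightarrow> (int^'m) \<times> (int^'n) \<Rightarrow> complex" where
  "fourier2 g k =
     (LINT z : torus_box \<times> torus_box | lborel.
         g z * cis (- (rdot (fst z) (fst k) + rdot (snd z) (snd k))))
     / of_real ((2 * pi) ^ (CARD('m) + CARD('n)))"

definition partial_dir :: "'a::euclidean_space \<Rightarrow> ('a \<Rightarrow> 'b::real_normed_vector) \<Rightarrow> 'a \<Rightarrow> 'b" where
  "partial_dir b g x = vector_derivative (\<lambda>t. g (x + t *\<^sub>R b)) (at 0)"

fun Ck :: "nat \<Rightarrow> ('a::euclidean_space \<Rightarrow> 'b::real_normed_vector) \<Rightarrow> bool" where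
  "Ck 0 g = continuous_on UNIV g"
| "Ck (Suc k) g = (continuous_on UNIV g \<and>
      (\<forall>b\<in>Basis. (\<forall>x. (\<lambda>t. g (x + t *\<^sub>R b)) differentiable (at 0)) \<and> Ck k (partial_dir b g)))"

definition in_Hs :: "real \<Rightarrow> ((real^'m) \<times> (real^'n) \<Rightarrow> complex) \<Rightarrow> bool" where
  "in_Hs s u \<longleftrightarrow> periodic_fun2 u \<and> u \<in> borel_measurable lborel \<and>
     set_integrable lborel (torus_box \<times> torus_box) (\<lambda>z. (cmod (u z))^2) \<and>
     (\<lambda>k::(int^'m) \<times> (int^'n). (1 + real_of_int (sqnorm (fst k) + sqnorm (snd k))) powr s
                              * (cmod (fourier2 u k))^2) summable_on UNIV"

text \<open>Indices (l, j, a), l in Z^nu, j in Z^d, a in {0,1}.\<close>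
type_synonym ('m,'n) idx = "(int^'m) \<times> (int^'n) \<times> nat"

text \<open>Matrix (in the Fourier basis e_{(l,j),a}) of the multiplication operator by the
  2x2 matrix function [[P00,P01],[P10,P11]] on T^nu x T^d.\<close>
definition mult_matrix ::
  "(nat \<Rightarrow> nat \<Rightarrow> ((real^'m) \<times> (real^'n) \<Rightarrow> complex)) \<Rightarrow> ('m,'n) idx \<Rightarrow> ('m,'n) idx \<Rightarrow> complex" where
  "mult_matrix P = (\<lambda>(l,j,a) (l',j',a'). fourier2 (P a a') (l - l', j - j'))"

definition dlast :: "((real^'m) \<times> (real^'n) \<times> real \<Rightarrow> real) \<Rightarrow> (real^'m) \<times> (real^'n) \<times> real \<Rightarrow> real" where
  "dlast f = (\<lambda>(\<phi>,x,t). deriv (\<lambda>t'. f (\<phi>,x,t')) t)"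

definition p_fun :: "((real^'m) \<times> (real^'n) \<times> real \<Rightarrow> real) \<Rightarrow> ((real^'m) \<times> (real^'n) \<Rightarrow> complex)
                      \<Rightarrow> (real^'m) \<times> (real^'n) \<Rightarrow> complex" where
  "p_fun f u = (\<lambda>(\<phi>,x). complex_of_real
      (f (\<phi>, x, (cmod (u (\<phi>,x)))^2) + dlast f (\<phi>, x, (cmod (u (\<phi>,x)))^2) * (cmod (u (\<phi>,x)))^2))"

definition q_fun :: "((real^'m) \<times> (real^'n) \<times> real \<Rightarrow> real) \<Rightarrow> ((real^'m) \<times> (real^'n) \<Rightarrow> complex)
                      \<Rightarrow> (real^'m) \<times> (real^'n) \<Rightarrow> complex" where
  "q_fun f u = (\<lambda>(\<phi>,x). complex_of_real (dlast f (\<phi>, x, (cmod (u (\<phi>,x)))^2)) * (u (\<phi>,x))^2)"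

definition T1 :: "((real^'m) \<times> (real^'n) \<times> real \<Rightarrow> real) \<Rightarrow> ((real^'m) \<times> (real^'n) \<Rightarrow> complex)
                   \<Rightarrow> ('m,'n) idx \<Rightarrow> ('m,'n) idx \<Rightarrow> complex" where
  "T1 f u = mult_matrix (\<lambda>a a'. if a = 0 \<and> a' = 0 then p_fun f u
                             else if a = 0 then q_fun f u
                             else if a' = 0 then (\<lambda>z. cnj (q_fun f u z))
                             else p_fun f u)"

definition T2 :: "((real^'n) \<Rightarrow> real) \<Rightarrow> ('m::finite,'n) idx \<Rightarrow> ('m,'n) idx \<Rightarrow> complex" where
  "T2 V = mult_matrix (\<lambda>a a'. if a = a' then (\<lambda>(\<phi>::(real^'m), x). complex_of_real (V x - torus_avg V))
                              else (\<lambda>_. 0))"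

text \<open>A(eps,lambda,theta) = D + T_2 - eps T_1 + theta Y, with omega = lambda * omegabar.\<close>
definition Amat :: "(real^'m) \<Rightarrow> ((real^'n) \<Rightarrow> real) \<Rightarrow> ((real^'m) \<times> (real^'n) \<times> real \<Rightarrow> real)
                    \<Rightarrow> ((real^'m) \<times> (real^'n) \<Rightarrow> complex) \<Rightarrow> real \<Rightarrow> real \<Rightarrow> real
                    \<Rightarrow> ('m,'n) idx \<Rightarrow> ('m,'n) idx \<Rightarrow> complex" where
  "Amat wbar V f u \<epsilon> lam \<theta> = (\<lambda>x y.
      (if x = y then
         (case x of (l,j,a) \<Rightarrow>
            complex_of_real ((if a = 0 then - rdot (lam *\<^sub>R wbar) l else rdot (lam *\<^sub>R wbar) l)
                             + of_int (sqnorm j) + torus_avg V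
                             + \<theta> * (if a = 0 then -1 else 1)))
       else 0)
      + T2 V x y - complex_of_real \<epsilon> * T1 f u x y)"

definition trunc_idx :: "nat \<Rightarrow> (int^'n::finite) \<Rightarrow> ('m::finite,'n) idx set" where
  "trunc_idx N j0 = {(l,j,a). maxnorm l \<le> int N \<and> maxnorm (j - j0) \<le> int N \<and> a \<in> {0,1}}"

definition l2norm_on :: "'i set \<Rightarrow> ('i \<Rightarrow> complex) \<Rightarrow> real" where
  "l2norm_on S v = sqrt (\<Sum>i\<in>S. (cmod (v i))^2)"

definition mat_apply_on :: "'i set \<Rightarrow> ('i \<Rightarrow> 'i \<Rightarrow> complex) \<Rightarrow> ('i \<Rightarrow> complex) \<Rightarrow> 'i \<Rightarrow> complex" where
  "mat_apply_on S M v = (\<lambda>i. \<Sum>k\<in>S. M i k * v k)"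

definition opnorm_on :: "'i set \<Rightarrow> ('i \<Rightarrow> 'i \<Rightarrow> complex) \<Rightarrow> real" where
  "opnorm_on S M = Sup {l2norm_on S (mat_apply_on S M v) | v. l2norm_on S v \<le> 1}"

definition is_inverse_on :: "'i set \<Rightarrow> ('i \<Rightarrow> 'i \<Rightarrow> complex) \<Rightarrow> ('i \<Rightarrow> 'i \<Rightarrow> complex) \<Rightarrow> bool" where
  "is_inverse_on S M B \<longleftrightarrow>
     (\<forall>i\<in>S. \<forall>k\<in>S. (\<Sum>z\<in>S. M i z * B z k) = (if i = k then 1 else 0)) \<and>
     (\<forall>i\<in>S. \<forall>k\<in>S. (\<Sum>z\<in>S. B i z * M z k) = (if i = k then 1 else 0))"

definition inv_norm_on :: "'i set \<Rightarrow> ('i \<Rightarrow> 'i \<Rightarrow> complex) \<Rightarrow> ereal" where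
  "inv_norm_on S M = (if \<exists>B. is_inverse_on S M B
                      then ereal (opnorm_on S (SOME B. is_inverse_on S M B)) else \<infinity>)"

definition B0 :: "real \<Rightarrow> (real^'m) \<Rightarrow> ((real^'n) \<Rightarrow> real) \<Rightarrow> ((real^'m) \<times> (real^'n) \<times> real \<Rightarrow> real)
                  \<Rightarrow> ((real^'m) \<times> (real^'n) \<Rightarrow> complex) \<Rightarrow> nat \<Rightarrow> (int^'n) \<Rightarrow> real \<Rightarrow> real \<Rightarrow> real set" where
  "B0 \<tau> wbar V f u N j0 \<epsilon> lam =
     {\<theta>. inv_norm_on (trunc_idx N j0 :: ('m,'n) idx set) (Amat wbar V f u \<epsilon> lam \<theta>) > ereal (real N powr \<tau>)}"

definition B02 :: "real \<Rightarrow> (real^'m) \<Rightarrow> ((real^'n) \<Rightarrow> real) \<Rightarrow> ((real^'m) \<times> (real^'n) \<times> real \<Rightarrow> real)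
                  \<Rightarrow> ((real^'m) \<times> (real^'n) \<Rightarrow> complex) \<Rightarrow> nat \<Rightarrow> (int^'n) \<Rightarrow> real \<Rightarrow> real \<Rightarrow> real set" where
  "B02 \<tau> wbar V f u N j0 \<epsilon> lam =
     {\<theta>. inv_norm_on (trunc_idx N j0 :: ('m,'n) idx set) (Amat wbar V f u \<epsilon> lam \<theta>) > ereal (real N powr \<tau> / 2)}"

end

theory Submission
  imports Defs "Jordan_Normal_Form.Determinant"
begin


lemma l2_L2: "l2norm_on S v = L2_set (\<lambda>i. cmod (v i)) S"
  unfolding l2norm_on_def L2_set_def by simp

lemma l2_nonneg: "0 \<le> l2norm_on S v"
  unfolding l2_L2 by simp

lemma l2_cong: "(\<And>i. i \<in> S \<Longrightarrow> v i = w i) \<Longrightarrow> l2norm_on S v = l2norm_on S w"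
  unfolding l2_L2 by (rule L2_set_cong) auto

lemma l2_add: "l2norm_on S (\<lambda>i. v i + w i) \<le> l2norm_on S v + l2norm_on S w"
proof -
  have "l2norm_on S (\<lambda>i. v i + w i) \<le> L2_set (\<lambda>i. cmod (v i) + cmod (w i)) S"
    unfolding l2_L2 by (rule L2_set_mono) (auto simp: norm_triangle_ineq)
  also have "\<dots> \<le> l2norm_on S v + l2norm_on S w"
    unfolding l2_L2 by (rule L2_set_triangle_ineq)
  finally show ?thesis .
qed

lemma l2_scale: "l2norm_on S (\<lambda>i. c * v i) = cmod c * l2norm_on S v"
  unfolding l2_L2 by (simp add: L2_set_right_distrib norm_mult)

lemma l2_diff: "l2norm_on S (\<lambda>i. v i - w i) \<le> l2norm_on S v + l2norm_on S w"
proof -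
  have "l2norm_on S (\<lambda>i. v i - w i) = l2norm_on S (\<lambda>i. v i + (-1) * w i)" by simp
  also have "\<dots> \<le> l2norm_on S v + l2norm_on S (\<lambda>i. (-1) * w i)" by (rule l2_add)
  also have "l2norm_on S (\<lambda>i. (-1) * w i) = l2norm_on S w" by (subst l2_scale) simp
  finally show ?thesis .
qed

lemma l2_zero: "finite S \<Longrightarrow> l2norm_on S v = 0 \<longleftrightarrow> (\<forall>i\<in>S. v i = 0)"
  unfolding l2_L2 by (simp add: L2_set_eq_0_iff)

lemma l2_member: "finite S \<Longrightarrow> i \<in> S \<Longrightarrow> cmod (v i) \<le> l2norm_on S v"
  unfolding l2_L2 by (rule member_le_L2_set) auto

lemma app_cong: "(\<And>k. k \<in> S \<Longrightarrow> v k = w k) \<Longrightarrow> mat_apply_on S M v i = mat_apply_on S M w i"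
  unfolding mat_apply_on_def by (rule sum.cong) auto

lemma app_add: "mat_apply_on S (\<lambda>i k. A i k + E i k) v i = mat_apply_on S A v i + mat_apply_on S E v i"
  unfolding mat_apply_on_def by (simp add: distrib_right sum.distrib)

lemma app_scale: "mat_apply_on S M (\<lambda>k. c * v k) i = c * mat_apply_on S M v i"
  unfolding mat_apply_on_def by (simp add: sum_distrib_left mult_ac)

lemma app_diag: "finite S \<Longrightarrow> i \<in> S \<Longrightarrow>
   mat_apply_on S (\<lambda>x y. if x = y then d x else 0) v i = d i * v i"
proof -
  assume a: "finite S" "i \<in> S"
  have "mat_apply_on S (\<lambda>x y. if x = y then d x else 0) v i = (\<Sum>k\<in>S. if i = k then d i * v k else 0)"
    unfolding mat_apply_on_def by (rule sum.cong) auto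
  also have "\<dots> = d i * v i" using a by simp
  finally show ?thesis .
qed

lemma app_bound: assumes "finite S" shows "\<exists>C\<ge>0. \<forall>v. l2norm_on S (mat_apply_on S M v) \<le> C * l2norm_on S v"
proof -
  define R where "R i = (\<Sum>k\<in>S. cmod (M i k))" for i
  have R0: "0 \<le> R i" for i unfolding R_def by (simp add: sum_nonneg)
  have "l2norm_on S (mat_apply_on S M v) \<le> L2_set R S * l2norm_on S v" for v
  proof -
    have "cmod (mat_apply_on S M v i) \<le> R i * l2norm_on S v" for i
    proof -
      have "cmod (mat_apply_on S M v i) \<le> (\<Sum>k\<in>S. cmod (M i k) * cmod (v k))"
        unfolding mat_apply_on_def by (rule order_trans[OF norm_sum]) (simp add: norm_mult)
      also have "\<dots> \<le> (\<Sum>k\<in>S. cmod (M i k) * l2norm_on S v)"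
        by (rule sum_mono) (simp add: l2_member[OF assms] mult_left_mono)
      finally show ?thesis unfolding R_def by (simp add: sum_distrib_right)
    qed
    hence "l2norm_on S (mat_apply_on S M v) \<le> L2_set (\<lambda>i. R i * l2norm_on S v) S"
      unfolding l2_L2 by (intro L2_set_mono) auto
    also have "\<dots> = L2_set R S * l2norm_on S v"
      by (simp add: L2_set_left_distrib l2_nonneg)
    finally show ?thesis .
  qed
  thus ?thesis by (intro exI[of _ "L2_set R S"]) auto
qed

lemma opnorm_bdd: assumes "finite S"
  shows "bdd_above {l2norm_on S (mat_apply_on S M v) | v. l2norm_on S v \<le> 1}"
proof -
  obtain C where C: "C \<ge> 0" "\<And>v. l2norm_on S (mat_apply_on S M v) \<le> C * l2norm_on S v"
    using app_bound[OF assms] by blast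
  show ?thesis
  proof (rule bdd_aboveI[of _ C], clarify)
    fix v assume "l2norm_on S v \<le> 1"
    hence "C * l2norm_on S v \<le> C" using C(1) by (simp add: mult_left_le)
    with C(2)[of v] show "l2norm_on S (mat_apply_on S M v) \<le> C" by linarith
  qed
qed

lemma opnorm_upper: assumes "finite S" "l2norm_on S v \<le> 1"
  shows "l2norm_on S (mat_apply_on S M v) \<le> opnorm_on S M"
  unfolding opnorm_on_def by (rule cSup_upper[OF _ opnorm_bdd[OF assms(1)]]) (use assms(2) in blast)

lemma opnorm_nonneg: assumes "finite S" shows "0 \<le> opnorm_on S M"
proof -
  have "l2norm_on S (mat_apply_on S M (\<lambda>_. 0)) \<le> opnorm_on S M"
    by (rule opnorm_upper[OF assms]) (simp add: l2norm_on_def)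
  thus ?thesis using l2_nonneg order_trans by blast
qed

lemma opnorm_bound: assumes "finite S"
  shows "l2norm_on S (mat_apply_on S M v) \<le> opnorm_on S M * l2norm_on S v"
proof (cases "l2norm_on S v = 0")
  case True
  hence z: "\<forall>i\<in>S. v i = 0" using l2_zero[OF assms] by blast
  have "mat_apply_on S M v i = 0" for i
    unfolding mat_apply_on_def using z by simp
  hence "l2norm_on S (mat_apply_on S M v) = 0" by (simp add: l2norm_on_def)
  thus ?thesis using True by simp
next
  case False
  define n where "n = l2norm_on S v"
  have n: "n > 0" using False l2_nonneg[of S v] unfolding n_def by linarith
  define w where "w k = complex_of_real (1/n) * v k" for k
  have lw: "l2norm_on S w = 1" unfolding w_def l2_scale n_def[symmetric] using n by (simp add: norm_divide)
  have eq: "mat_apply_on S M w = (\<lambda>i. complex_of_real (1/n) * mat_apply_on S M v i)"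
    unfolding w_def by (rule ext) (rule app_scale)
  have "l2norm_on S (mat_apply_on S M w) = (1/n) * l2norm_on S (mat_apply_on S M v)"
    unfolding eq l2_scale using n by (simp add: norm_divide)
  with opnorm_upper[OF assms, of w M] lw have "(1/n) * l2norm_on S (mat_apply_on S M v) \<le> opnorm_on S M"
    by simp
  thus ?thesis using n unfolding n_def[symmetric] by (simp add: field_simps)
qed

lemma opnorm_le: assumes "c \<ge> 0" "\<And>v. l2norm_on S (mat_apply_on S M v) \<le> c * l2norm_on S v"
  shows "opnorm_on S M \<le> c"
  unfolding opnorm_on_def
proof (rule cSup_least)
  show "{l2norm_on S (mat_apply_on S M v) |v. l2norm_on S v \<le> 1} \<noteq> {}"
  proof -
    have "l2norm_on S (\<lambda>_. 0::complex) \<le> 1" by (simp add: l2norm_on_def)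
    thus ?thesis by blast
  qed
next
  fix x assume "x \<in> {l2norm_on S (mat_apply_on S M v) |v. l2norm_on S v \<le> 1}"
  then obtain v where x: "x = l2norm_on S (mat_apply_on S M v)" "l2norm_on S v \<le> 1" by blast
  have "c * l2norm_on S v \<le> c" using assms(1) x(2) by (simp add: mult_left_le)
  thus "x \<le> c" using assms(2)[of v] x(1) by linarith
qed

lemma inv_left: assumes "finite S" "is_inverse_on S A B" "i \<in> S"
  shows "mat_apply_on S B (mat_apply_on S A v) i = v i"
proof -
  have "mat_apply_on S B (mat_apply_on S A v) i = (\<Sum>z\<in>S. \<Sum>k\<in>S. B i z * (A z k * v k))"
    unfolding mat_apply_on_def by (simp add: sum_distrib_left)
  also have "\<dots> = (\<Sum>k\<in>S. (\<Sum>z\<in>S. B i z * A z k) * v k)"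
    by (subst sum.swap) (simp add: sum_distrib_left sum_distrib_right mult_ac)
  also have "\<dots> = (\<Sum>k\<in>S. (if i = k then 1 else 0) * v k)"
    using assms(2,3) unfolding is_inverse_on_def by (intro sum.cong) auto
  also have "\<dots> = (\<Sum>k\<in>S. if i = k then v k else 0)" by (rule sum.cong) auto
  also have "\<dots> = v i" using assms(1,3) by simp
  finally show ?thesis .
qed

lemma inv_right: assumes "finite S" "is_inverse_on S A B" "i \<in> S"
  shows "mat_apply_on S A (mat_apply_on S B v) i = v i"
proof -
  have "is_inverse_on S B A" using assms(2) unfolding is_inverse_on_def by blast
  thus ?thesis by (rule inv_left[OF assms(1) _ assms(3)])
qed

lemma inv_unique_app: assumes "finite S" "is_inverse_on S M B1" "is_inverse_on S M B2" "i \<in> S"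
  shows "mat_apply_on S B1 w i = mat_apply_on S B2 w i"
proof -
  have "mat_apply_on S B1 w i = mat_apply_on S B1 (mat_apply_on S M (mat_apply_on S B2 w)) i"
    by (rule app_cong) (use inv_right[OF assms(1,3)] in auto)
  also have "\<dots> = mat_apply_on S B2 w i" by (rule inv_left[OF assms(1,2,4)])
  finally show ?thesis .
qed

lemma inv_norm_eq: assumes "finite S" "is_inverse_on S M B"
  shows "inv_norm_on S M = ereal (opnorm_on S B)"
proof -
  let ?B = "SOME B. is_inverse_on S M B"
  have B': "is_inverse_on S M ?B" using someI[of "is_inverse_on S M", OF assms(2)] .
  have "l2norm_on S (mat_apply_on S ?B v) = l2norm_on S (mat_apply_on S B v)" for v
    by (rule l2_cong) (rule inv_unique_app[OF assms(1) B' assms(2)])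
  hence "opnorm_on S ?B = opnorm_on S B" unfolding opnorm_on_def by simp
  thus ?thesis unfolding inv_norm_on_def using assms(2) by auto
qed

lemma inv_norm_le: assumes "finite S" "is_inverse_on S M B" "K \<ge> 0"
   "\<And>w. l2norm_on S (mat_apply_on S B w) \<le> K * l2norm_on S w"
  shows "inv_norm_on S M \<le> ereal K"
  using inv_norm_eq[OF assms(1,2)] opnorm_le[OF assms(3,4)] by simp

lemma inv_norm_le_D: assumes "finite S" "inv_norm_on S M \<le> ereal K"
  shows "\<exists>B. is_inverse_on S M B \<and> K \<ge> 0 \<and> (\<forall>w. l2norm_on S (mat_apply_on S B w) \<le> K * l2norm_on S w)"
proof -
  have ex: "\<exists>B. is_inverse_on S M B" using assms(2) unfolding inv_norm_on_def by (auto split: if_splits)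
  then obtain B where B: "is_inverse_on S M B" by blast
  have "opnorm_on S B \<le> K" using inv_norm_eq[OF assms(1) B] assms(2) by simp
  moreover have "0 \<le> opnorm_on S B" by (rule opnorm_nonneg[OF assms(1)])
  moreover have "l2norm_on S (mat_apply_on S B w) \<le> K * l2norm_on S w" for w
  proof -
    have "l2norm_on S (mat_apply_on S B w) \<le> opnorm_on S B * l2norm_on S w" by (rule opnorm_bound[OF assms(1)])
    also have "\<dots> \<le> K * l2norm_on S w" by (rule mult_right_mono[OF \<open>opnorm_on S B \<le> K\<close> l2_nonneg])
    finally show ?thesis .
  qed
  ultimately show ?thesis using B by (intro exI[of _ B]) auto
qed



lemma exists_inverse:
  assumes S: "finite S"
    and inj: "\<And>v. (\<forall>i\<in>S. mat_apply_on S M v i = 0) \<Longrightarrow> (\<forall>i\<in>S. v i = 0)"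
  shows "\<exists>B. is_inverse_on S M B"
proof -
  define n where "n = card S"
  obtain e where e: "bij_betw e {0..<n} S" using ex_bij_betw_nat_finite[OF S] unfolding n_def by blast
  define ei where "ei = the_inv_into {0..<n} e"
  have einjo: "inj_on e {0..<n}" and img: "e ` {0..<n} = S" using e unfolding bij_betw_def by blast+
  have ei1: "ei (e p) = p" if "p < n" for p
    unfolding ei_def by (rule the_inv_into_f_f[OF einjo]) (use that in simp)
  have ei2: "e (ei x) = x" "ei x < n" if "x \<in> S" for x
  proof -
    have x: "x \<in> e ` {0..<n}" using that img by simp
    show "e (ei x) = x" unfolding ei_def by (rule f_the_inv_into_f[OF einjo x])
    have "ei x \<in> {0..<n}" unfolding ei_def by (rule the_inv_into_into[OF einjo x]) simp
    thus "ei x < n" by simp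
  qed
  have eS: "e p \<in> S" if "p < n" for p using img that by auto
  have einj: "(e p = e q) = (p = q)" if "p < n" "q < n" for p q
    using inj_on_eq_iff[OF einjo] that by simp
  have reidx: "(\<Sum>k\<in>S. g k) = (\<Sum>q\<in>{0..<n}. g (e q))" for g :: "_ \<Rightarrow> complex"
    using sum.reindex_bij_betw[OF e, of g] by simp
  define Am :: "complex Matrix.mat" where "Am = Matrix.mat n n (\<lambda>(i,k). M (e i) (e k))"
  have Am: "Am \<in> carrier_mat n n" unfolding Am_def by simp
  have "Determinant.det Am \<noteq> 0"
  proof
    assume "Determinant.det Am = 0"
    then obtain w where w: "w \<in> carrier_vec n" "w \<noteq> 0\<^sub>v n" "Am *\<^sub>v w = 0\<^sub>v n"
      using det_0_iff_vec_prod_zero_field[OF Am] by blast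
    define v where "v x = vec_index w (ei x)" for x
    have "\<forall>i\<in>S. mat_apply_on S M v i = 0"
    proof
      fix i assume i: "i \<in> S"
      obtain p where p: "p < n" "i = e p" using ei2[OF i] by metis
      have "mat_apply_on S M v i = (\<Sum>q\<in>{0..<n}. M (e p) (e q) * vec_index w q)"
        unfolding mat_apply_on_def reidx v_def p(2) by (rule sum.cong) (auto simp: ei1)
      also have "\<dots> = vec_index (Am *\<^sub>v w) p"
        using w(1) p(1) unfolding Am_def by (simp add: scalar_prod_def Matrix.row_def)
      also have "\<dots> = 0" using w(3) p(1) by simp
      finally show "mat_apply_on S M v i = 0" .
    qed
    hence z: "\<forall>i\<in>S. v i = 0" by (rule inj)
    have "w = 0\<^sub>v n"
    proof (rule eq_vecI)
      fix q assume "q < dim_vec (0\<^sub>v n)"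
      hence q: "q < n" by simp
      have "vec_index w q = v (e q)" unfolding v_def using q by (simp add: ei1)
      thus "vec_index w q = vec_index (0\<^sub>v n) q" using z eS[OF q] q by simp
    qed (use w(1) in simp)
    with w(2) show False by simp
  qed
  hence "Am \<in> Units (ring_mat TYPE(complex) n ())" by (rule det_non_zero_imp_unit[OF Am])
  hence "\<exists>Bm\<in>carrier_mat n n. Bm * Am = 1\<^sub>m n \<and> Am * Bm = 1\<^sub>m n"
    by (simp add: Units_def ring_mat_def)
  then obtain Bm where Bm: "Bm \<in> carrier_mat n n" "Bm * Am = 1\<^sub>m n" "Am * Bm = 1\<^sub>m n"
    by blast
  define B where "B x y = Bm $$ (ei x, ei y)" for x y
  have prod1: "(\<Sum>z\<in>S. M i z * B z k) = (if i = k then 1 else 0)" if iS: "i \<in> S" and kS: "k \<in> S" for i k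
  proof -
    obtain p where p: "p < n" "i = e p" using ei2[OF iS] by metis
    obtain q where q: "q < n" "k = e q" using ei2[OF kS] by metis
    have "(\<Sum>z\<in>S. M i z * B z k) = (\<Sum>r\<in>{0..<n}. Am $$ (p, r) * Bm $$ (r, q))"
      unfolding reidx B_def p(2) q(2) Am_def using p q by (intro sum.cong) (auto simp: ei1)
    also have "\<dots> = (Am * Bm) $$ (p, q)"
      using Am Bm(1) p q by (simp add: scalar_prod_def Matrix.row_def col_def)
    also have "\<dots> = (if p = q then 1 else 0)"
      using Bm(3) p q by simp
    also have "\<dots> = (if i = k then 1 else 0)" using einj[OF p(1) q(1)] p(2) q(2) by simp
    finally show ?thesis .
  qed
  have prod2: "(\<Sum>z\<in>S. B i z * M z k) = (if i = k then 1 else 0)" if iS: "i \<in> S" and kS: "k \<in> S" for i k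
  proof -
    obtain p where p: "p < n" "i = e p" using ei2[OF iS] by metis
    obtain q where q: "q < n" "k = e q" using ei2[OF kS] by metis
    have "(\<Sum>z\<in>S. B i z * M z k) = (\<Sum>r\<in>{0..<n}. Bm $$ (p, r) * Am $$ (r, q))"
      unfolding reidx B_def p(2) q(2) Am_def using p q by (intro sum.cong) (auto simp: ei1)
    also have "\<dots> = (Bm * Am) $$ (p, q)"
      using Am Bm(1) p q by (simp add: scalar_prod_def Matrix.row_def col_def)
    also have "\<dots> = (if p = q then 1 else 0)"
      using Bm(2) p q by simp
    also have "\<dots> = (if i = k then 1 else 0)" using einj[OF p(1) q(1)] p(2) q(2) by simp
    finally show ?thesis .
  qed
  show ?thesis unfolding is_inverse_on_def using prod1 prod2 by blast
qed

lemma perturb: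
  assumes S: "finite S" and AB: "is_inverse_on S A B" and K: "K \<ge> 0"
    and BK: "\<And>v. l2norm_on S (mat_apply_on S B v) \<le> K * l2norm_on S v"
    and e: "e \<ge> 0" and Ee: "\<And>v. l2norm_on S (mat_apply_on S E v) \<le> e * l2norm_on S v"
    and eK: "e * K < 1"
  shows "\<exists>B'. is_inverse_on S (\<lambda>i k. A i k + E i k) B' \<and>
     (\<forall>w. l2norm_on S (mat_apply_on S B' w) \<le> K / (1 - e * K) * l2norm_on S w)"
proof -
  let ?A' = "\<lambda>i k. A i k + E i k"
  have key: "(1 - e * K) * l2norm_on S v \<le> K * l2norm_on S (mat_apply_on S ?A' v)" for v
  proof -
    have "l2norm_on S v = l2norm_on S (mat_apply_on S B (mat_apply_on S A v))"
      by (rule l2_cong) (simp add: inv_left[OF S AB])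
    also have "\<dots> \<le> K * l2norm_on S (mat_apply_on S A v)" by (rule BK)
    also have "l2norm_on S (mat_apply_on S A v) =
       l2norm_on S (\<lambda>i. mat_apply_on S ?A' v i - mat_apply_on S E v i)"
      by (rule l2_cong) (simp add: app_add)
    also have "\<dots> \<le> l2norm_on S (mat_apply_on S ?A' v) + e * l2norm_on S v"
      using l2_diff[of S "mat_apply_on S ?A' v" "mat_apply_on S E v"] Ee[of v] by linarith
    finally have "l2norm_on S v \<le> K * (l2norm_on S (mat_apply_on S ?A' v) + e * l2norm_on S v)"
      using K by (simp add: mult_left_mono)
    thus ?thesis by (simp add: algebra_simps)
  qed
  have pos: "1 - e * K > 0" using eK by simp
  have "\<exists>B'. is_inverse_on S ?A' B'"
  proof (rule exists_inverse[OF S])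
    fix v assume z: "\<forall>i\<in>S. mat_apply_on S ?A' v i = 0"
    have "l2norm_on S (mat_apply_on S ?A' v) = 0" using l2_zero[OF S] z by blast
    hence "(1 - e * K) * l2norm_on S v \<le> 0" using key[of v] by simp
    hence "l2norm_on S v \<le> 0" using pos by (simp add: mult_le_0_iff)
    hence "l2norm_on S v = 0" using l2_nonneg[of S v] by linarith
    thus "\<forall>i\<in>S. v i = 0" using l2_zero[OF S] by blast
  qed
  then obtain B' where B': "is_inverse_on S ?A' B'" by blast
  have "l2norm_on S (mat_apply_on S B' w) \<le> K / (1 - e * K) * l2norm_on S w" for w
  proof -
    have "l2norm_on S (mat_apply_on S ?A' (mat_apply_on S B' w)) = l2norm_on S w"
      by (rule l2_cong) (simp add: inv_right[OF S B'])
    with key[of "mat_apply_on S B' w"] pos show ?thesis by (simp add: field_simps)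
  qed
  with B' show ?thesis by blast
qed



definition sg :: "('m,'n) idx \<Rightarrow> real" where
  "sg x = (case x of (l,j,a) \<Rightarrow> if a = 0 then -1 else 1)"

lemma sg_sq: "sg x * sg x = 1" and sg_abs: "\<bar>sg x\<bar> = 1"
  by (cases x; simp add: sg_def)+

lemma Amat_shift:
  "Amat wbar V f u \<epsilon> lam \<theta>' x y = Amat wbar V f u \<epsilon> lam \<theta> x y
     + (if x = y then complex_of_real ((\<theta>' - \<theta>) * sg x) else 0)"
  by (cases x) (auto simp: Amat_def sg_def algebra_simps)

lemma l2_diag: assumes "finite S" "\<And>i. i \<in> S \<Longrightarrow> cmod (d i) = r" "r \<ge> 0"
  shows "l2norm_on S (mat_apply_on S (\<lambda>x y. if x = y then d x else 0) v) = r * l2norm_on S v"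
proof -
  have "l2norm_on S (mat_apply_on S (\<lambda>x y. if x = y then d x else 0) v) = L2_set (\<lambda>i. r * cmod (v i)) S"
    unfolding l2_L2 by (rule L2_set_cong) (auto simp: app_diag[OF assms(1)] norm_mult assms(2))
  also have "\<dots> = r * l2norm_on S v" unfolding l2_L2 by (simp add: L2_set_right_distrib assms(3))
  finally show ?thesis .
qed

lemma finite_box: "finite {x::int^'n. \<forall>i. \<bar>vec_nth x i - vec_nth c i\<bar> \<le> int N}"
proof (rule finite_subset)
  show "{x::int^'n. \<forall>i. \<bar>vec_nth x i - vec_nth c i\<bar> \<le> int N}
     \<subseteq> vec_lambda ` (PiE UNIV (\<lambda>i. {vec_nth c i - int N .. vec_nth c i + int N}))"
  proof
    fix x :: "int^'n" assume x: "x \<in> {x. \<forall>i. \<bar>vec_nth x i - vec_nth c i\<bar> \<le> int N}"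
    have "(\<lambda>i. vec_nth x i) \<in> PiE UNIV (\<lambda>i. {vec_nth c i - int N .. vec_nth c i + int N})"
    proof -
      have "vec_nth x i \<in> {vec_nth c i - int N .. vec_nth c i + int N}" for i
      proof -
        from x have "\<bar>vec_nth x i - vec_nth c i\<bar> \<le> int N" by simp
        thus ?thesis by (auto simp: abs_le_iff)
      qed
      thus ?thesis by (simp add: PiE_iff)
    qed
    moreover have "x = vec_lambda (\<lambda>i. vec_nth x i)" by simp
    ultimately show "x \<in> vec_lambda ` (PiE UNIV (\<lambda>i. {vec_nth c i - int N .. vec_nth c i + int N}))"
      by blast
  qed
  show "finite (vec_lambda ` (PiE UNIV (\<lambda>i. {vec_nth c i - int N .. vec_nth c i + int N})))"
    by (intro finite_imageI finite_PiE) auto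
qed

lemma maxnorm_ge: "\<bar>vec_nth x i\<bar> \<le> maxnorm (x :: ('a::{linorder,abs})^'n)"
  unfolding maxnorm_def by (rule Max_ge) auto

lemma finite_trunc: "finite (trunc_idx N j0 :: ('m::finite,'n::finite) idx set)"
proof (rule finite_subset)
  show "trunc_idx N j0 \<subseteq> {l::int^'m. \<forall>i. \<bar>vec_nth l i - vec_nth 0 i\<bar> \<le> int N}
       \<times> {j. \<forall>i. \<bar>vec_nth j i - vec_nth j0 i\<bar> \<le> int N} \<times> {0,1}"
  proof
    fix x :: "('m,'n) idx" assume x: "x \<in> trunc_idx N j0"
    obtain l j a where xe: "x = (l,j,a)" by (cases x)
    from x have h: "maxnorm l \<le> int N" "maxnorm (j - j0) \<le> int N" "a \<in> {0,1}"
      unfolding xe trunc_idx_def by auto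
    have "\<bar>vec_nth l i - vec_nth 0 i\<bar> \<le> int N" for i using maxnorm_ge[of l i] h(1) by simp
    moreover have "\<bar>vec_nth j i - vec_nth j0 i\<bar> \<le> int N" for i
      using maxnorm_ge[of "j - j0" i] h(2) by simp
    ultimately show "x \<in> {l::int^'m. \<forall>i. \<bar>vec_nth l i - vec_nth 0 i\<bar> \<le> int N}
       \<times> {j. \<forall>i. \<bar>vec_nth j i - vec_nth j0 i\<bar> \<le> int N} \<times> {0,1}" using h(3) unfolding xe by simp
  qed
  show "finite ({l::int^'m. \<forall>i. \<bar>vec_nth l i - vec_nth 0 i\<bar> \<le> int N}
       \<times> {j. \<forall>i. \<bar>vec_nth j i - vec_nth j0 i\<bar> \<le> int N} \<times> {0::nat,1})"
    by (intro finite_cartesian_product finite_box) auto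
qed

lemma perturb_theta:
  fixes S :: "('m::finite,'n::finite) idx set"
  assumes S: "finite S" and le: "inv_norm_on S (Amat wbar V f u \<epsilon> lam \<theta>') \<le> ereal c"
    and small: "\<bar>\<theta> - \<theta>'\<bar> * c < 1"
  shows "inv_norm_on S (Amat wbar V f u \<epsilon> lam \<theta>) \<le> ereal (c / (1 - \<bar>\<theta> - \<theta>'\<bar> * c))"
proof -
  obtain B where B: "is_inverse_on S (Amat wbar V f u \<epsilon> lam \<theta>') B" "c \<ge> 0"
    "\<And>w. l2norm_on S (mat_apply_on S B w) \<le> c * l2norm_on S w"
    using inv_norm_le_D[OF S le] by blast
  let ?E = "\<lambda>x y. if x = y then complex_of_real ((\<theta> - \<theta>') * sg x) else 0"
  have E: "l2norm_on S (mat_apply_on S ?E v) \<le> \<bar>\<theta> - \<theta>'\<bar> * l2norm_on S v" for v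
  proof -
    have "l2norm_on S (mat_apply_on S ?E v) = \<bar>\<theta> - \<theta>'\<bar> * l2norm_on S v"
      by (rule l2_diag[OF S]) (auto simp: abs_mult sg_abs simp del: of_real_mult of_real_diff)
    thus ?thesis by simp
  qed
  obtain B' where B': "is_inverse_on S (\<lambda>i k. Amat wbar V f u \<epsilon> lam \<theta>' i k + ?E i k) B'"
    "\<And>w. l2norm_on S (mat_apply_on S B' w) \<le> c / (1 - \<bar>\<theta> - \<theta>'\<bar> * c) * l2norm_on S w"
    using perturb[OF S B(1) B(2) B(3) _ E small] by auto
  have eq: "(\<lambda>i k. Amat wbar V f u \<epsilon> lam \<theta>' i k + ?E i k) = Amat wbar V f u \<epsilon> lam \<theta>"
    by (intro ext) (simp add: Amat_shift[of _ _ _ _ _ _ \<theta> _ _ \<theta>'])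
  show ?thesis
  proof (rule inv_norm_le[OF S B'(1)[unfolded eq]])
    show "0 \<le> c / (1 - \<bar>\<theta> - \<theta>'\<bar> * c)" using B(2) small by simp
  qed (rule B'(2))
qed

lemma large_theta:
  fixes S :: "('m::finite,'n::finite) idx set"
  assumes S: "finite S" and big: "\<bar>\<theta>\<bar> > opnorm_on S (Amat wbar V f u \<epsilon> lam 0)"
  shows "inv_norm_on S (Amat wbar V f u \<epsilon> lam \<theta>) \<le> ereal (1 / (\<bar>\<theta>\<bar> - opnorm_on S (Amat wbar V f u \<epsilon> lam 0)))"
proof -
  define c0 where "c0 = opnorm_on S (Amat wbar V f u \<epsilon> lam 0)"
  have c0: "c0 \<ge> 0" unfolding c0_def by (rule opnorm_nonneg[OF S])
  have big': "\<bar>\<theta>\<bar> > c0" using big unfolding c0_def .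
  have th: "\<bar>\<theta>\<bar> > 0" using big c0 unfolding c0_def[symmetric] by linarith
  let ?A = "\<lambda>x y. if x = y then complex_of_real (\<theta> * sg x) else 0"
  let ?B = "\<lambda>x y. if x = y then complex_of_real (sg x / \<theta>) else 0"
  have inv: "is_inverse_on S ?A ?B"
  proof -
    have 1: "(\<Sum>z\<in>S. ?A i z * ?B z k) = (if i = k then 1 else 0)" if "i \<in> S" for i k
    proof -
      have "(\<Sum>z\<in>S. ?A i z * ?B z k) = mat_apply_on S ?A (\<lambda>z. ?B z k) i"
        by (simp add: mat_apply_on_def)
      also have "\<dots> = complex_of_real (\<theta> * sg i) * ?B i k" by (rule app_diag[OF S that])
      also have "\<dots> = (if i = k then 1 else 0)" using th sg_sq[of i]
        by (auto simp flip: of_real_mult)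
      finally show ?thesis .
    qed
    have 2: "(\<Sum>z\<in>S. ?B i z * ?A z k) = (if i = k then 1 else 0)" if "i \<in> S" for i k
    proof -
      have "(\<Sum>z\<in>S. ?B i z * ?A z k) = mat_apply_on S ?B (\<lambda>z. ?A z k) i"
        by (simp add: mat_apply_on_def)
      also have "\<dots> = complex_of_real (sg i / \<theta>) * ?A i k" by (rule app_diag[OF S that])
      also have "\<dots> = (if i = k then 1 else 0)" using th sg_sq[of i]
        by (auto simp flip: of_real_mult)
      finally show ?thesis .
    qed
    show ?thesis unfolding is_inverse_on_def using 1 2 by blast
  qed
  have Bb: "l2norm_on S (mat_apply_on S ?B v) \<le> (1 / \<bar>\<theta>\<bar>) * l2norm_on S v" for v
  proof -
    have "l2norm_on S (mat_apply_on S ?B v) = (1 / \<bar>\<theta>\<bar>) * l2norm_on S v"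
      by (rule l2_diag[OF S]) (auto simp: abs_divide sg_abs simp del: of_real_divide)
    thus ?thesis by simp
  qed
  have Eb: "l2norm_on S (mat_apply_on S (Amat wbar V f u \<epsilon> lam 0) v) \<le> c0 * l2norm_on S v" for v
    unfolding c0_def by (rule opnorm_bound[OF S])
  have eK: "c0 * (1 / \<bar>\<theta>\<bar>) < 1" using big th unfolding c0_def[symmetric] by (simp add: field_simps)
  obtain B' where B': "is_inverse_on S (\<lambda>i k. ?A i k + Amat wbar V f u \<epsilon> lam 0 i k) B'"
    "\<And>w. l2norm_on S (mat_apply_on S B' w) \<le> (1 / \<bar>\<theta>\<bar>) / (1 - c0 * (1 / \<bar>\<theta>\<bar>)) * l2norm_on S w"
    using perturb[OF S inv _ Bb c0 Eb eK] by auto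
  have eq: "(\<lambda>i k. ?A i k + Amat wbar V f u \<epsilon> lam 0 i k) = Amat wbar V f u \<epsilon> lam \<theta>"
    by (intro ext) (simp add: Amat_shift[of _ _ _ _ _ _ \<theta> _ _ 0])
  have val: "(1 / \<bar>\<theta>\<bar>) / (1 - c0 * (1 / \<bar>\<theta>\<bar>)) = 1 / (\<bar>\<theta>\<bar> - c0)"
    using th eK by (simp add: field_simps)
  show ?thesis unfolding c0_def[symmetric]
  proof (rule inv_norm_le[OF S B'(1)[unfolded eq]])
    show "0 \<le> 1 / (\<bar>\<theta>\<bar> - c0)" using big' by simp
  qed (rule B'(2)[unfolded val])
qed



theorem lemma6p4:
  fixes wbar :: "(real^'nu)" and V :: "(real^'d) \<Rightarrow> real"
    and f :: "(real^'nu) \<times> (real^'d) \<times> real \<Rightarrow> real"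
    and uplus :: "real \<Rightarrow> real \<Rightarrow> (real^'nu) \<times> (real^'d) \<Rightarrow> complex"
    and \<tau> \<epsilon>0 s :: real and r :: nat
  assumes wbar: "maxnorm wbar \<le> 1"
    and tau: "\<tau> > 0" and eps0: "\<epsilon>0 > 0"
    and r: "r \<ge> 1"
    and V: "Ck r V" "torus_periodic V"
    and f: "Ck r f" "periodic_fun3 f"
    and s: "s > real (CARD('d) + CARD('nu)) / 2"
    and u: "\<And>\<epsilon> lam. \<epsilon> \<in> {0..\<epsilon>0} \<Longrightarrow> lam \<in> {1/2..3/2} \<Longrightarrow> in_Hs s (uplus \<epsilon> lam)"
  shows "\<forall>(N::nat) (j0::(int^'d)) \<epsilon> lam. N \<ge> 1 \<longrightarrow> \<epsilon> \<in> {0..\<epsilon>0} \<longrightarrow> lam \<in> {1/2..3/2} \<longrightarrow>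
     (let M = measure lborel (B02 \<tau> wbar V f (uplus \<epsilon> lam) N j0 \<epsilon> lam) in
      \<exists>I :: (real \<times> real) list.
         real (length I) \<le> 2 * M * real N powr \<tau> \<and>
         (\<forall>(a,b)\<in>set I. b - a \<le> real N powr (-\<tau>)) \<and>
         B0 \<tau> wbar V f (uplus \<epsilon> lam) N j0 \<epsilon> lam \<subseteq> (\<Union>(a,b)\<in>set I. {a..b}))"
proof (intro allI impI)
  fix N :: nat and j0 :: "int^'d" and \<epsilon> lam :: real
  assume N: "N \<ge> 1" and "\<epsilon> \<in> {0..\<epsilon>0}" "lam \<in> {1/2..3/2}"
  define S where "S = (trunc_idx N j0 :: ('nu,'d) idx set)"
  have S: "finite S" unfolding S_def by (rule finite_trunc)
  define F where "F \<theta> = Amat wbar V f (uplus \<epsilon> lam) \<epsilon> lam \<theta>" for \<theta>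
  define P where "P = real N powr \<tau>"
  define h where "h = real N powr (-\<tau>)"
  define c where "c = P / 2"
  have P: "P > 0" using N unfolding P_def by simp
  have hP: "h * P = 1" unfolding h_def P_def powr_minus using N by simp
  have h: "h > 0" unfolding h_def using N by simp
  have c: "c > 0" using P unfolding c_def by simp
  have hc: "h * c = 1/2" using hP unfolding c_def by simp
  define B0s where "B0s = B0 \<tau> wbar V f (uplus \<epsilon> lam) N j0 \<epsilon> lam"
  define B2s where "B2s = B02 \<tau> wbar V f (uplus \<epsilon> lam) N j0 \<epsilon> lam"
  have B0s: "B0s = {\<theta>. inv_norm_on S (F \<theta>) > ereal P}"
    unfolding B0s_def B0_def S_def F_def P_def by simp
  have B2s: "B2s = {\<theta>. inv_norm_on S (F \<theta>) > ereal c}"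
    unfolding B2s_def B02_def S_def F_def c_def P_def by simp
  have sub: "B0s \<subseteq> B2s"
  proof
    fix \<theta> assume "\<theta> \<in> B0s"
    hence a: "ereal P < inv_norm_on S (F \<theta>)" unfolding B0s by simp
    have b: "ereal c < ereal P" using P unfolding c_def by simp
    show "\<theta> \<in> B2s" unfolding B2s using order.strict_trans[OF b a] by simp
  qed
  have near: "\<theta>' \<in> B2s" if th: "\<theta> \<in> B0s" and d: "\<bar>\<theta>' - \<theta>\<bar> \<le> h" for \<theta> \<theta>'
  proof (rule ccontr)
    assume "\<theta>' \<notin> B2s"
    hence le: "inv_norm_on S (F \<theta>') \<le> ereal c" unfolding B2s by (simp add: not_less)
    have "\<bar>\<theta> - \<theta>'\<bar> * c \<le> h * c" using d c by (simp add: abs_minus_commute mult_right_mono)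
    hence sm: "\<bar>\<theta> - \<theta>'\<bar> * c \<le> 1/2" using hc by simp
    have "inv_norm_on S (F \<theta>) \<le> ereal (c / (1 - \<bar>\<theta> - \<theta>'\<bar> * c))"
      unfolding F_def by (rule perturb_theta[OF S le[unfolded F_def]]) (use sm in linarith)
    also have "c / (1 - \<bar>\<theta> - \<theta>'\<bar> * c) \<le> c / (1/2)"
      by (rule divide_left_mono) (use sm c in auto)
    also have "c / (1/2) = P" unfolding c_def by simp
    finally have "inv_norm_on S (F \<theta>) \<le> ereal P" by simp
    moreover have "ereal P < inv_norm_on S (F \<theta>)" using th unfolding B0s by simp
    ultimately show False by simp
  qed
  define c0 where "c0 = opnorm_on S (F 0)"
  have c0: "c0 \<ge> 0" unfolding c0_def by (rule opnorm_nonneg[OF S])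
  define R where "R = c0 + 1/c + 1"
  have bnd: "\<bar>\<theta>\<bar> \<le> R" if th: "\<theta> \<in> B2s" for \<theta>
  proof (rule ccontr)
    assume "\<not> \<bar>\<theta>\<bar> \<le> R"
    hence big: "\<bar>\<theta>\<bar> - c0 > 1/c" unfolding R_def by simp
    have big': "\<bar>\<theta>\<bar> > opnorm_on S (Amat wbar V f (uplus \<epsilon> lam) \<epsilon> lam 0)"
      using big c unfolding c0_def F_def by (smt (verit) divide_pos_pos)
    have "inv_norm_on S (F \<theta>) \<le> ereal (1 / (\<bar>\<theta>\<bar> - c0))"
      unfolding F_def c0_def by (rule large_theta[OF S big'])
    also have "1 / (\<bar>\<theta>\<bar> - c0) \<le> c"
    proof -
      have pos: "\<bar>\<theta>\<bar> - c0 > 0" using big c by (smt (verit) divide_pos_pos)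
      have "c * (\<bar>\<theta>\<bar> - c0) > 1" using big c by (simp add: field_simps)
      thus ?thesis using pos by (simp add: divide_le_eq)
    qed
    finally have "inv_norm_on S (F \<theta>) \<le> ereal c" by simp
    moreover have "ereal c < inv_norm_on S (F \<theta>)" using th unfolding B2s by simp
    ultimately show False by simp
  qed
  have opn: "open B2s"
    unfolding open_dist
  proof (intro ballI)
    fix \<theta> assume "\<theta> \<in> B2s"
    hence gt: "ereal c < inv_norm_on S (F \<theta>)" unfolding B2s by simp
    obtain r where r: "ereal c < ereal r" "ereal r < inv_norm_on S (F \<theta>)"
      using ereal_dense2[OF gt] by blast
    hence cr: "c < r" by simp
    have rc: "r * c > 0" using cr c by simp
    define e where "e = (r - c) / (r * c)"
    have e: "e > 0" unfolding e_def using cr rc by simp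
    show "\<exists>e>0. \<forall>y. dist y \<theta> < e \<longrightarrow> y \<in> B2s"
    proof (intro exI[of _ e] conjI allI impI e)
      fix y assume "dist y \<theta> < e"
      hence d: "\<bar>\<theta> - y\<bar> < e" by (simp add: dist_real_def abs_minus_commute)
      define t where "t = \<bar>\<theta> - y\<bar>"
      have "t * (r * c) < r - c" using d rc unfolding t_def e_def by (simp add: pos_less_divide_eq)
      moreover have "r * (1 - t * c) = r - t * (r * c)" by (simp add: algebra_simps)
      ultimately have key: "c < r * (1 - t * c)" by linarith
      have "0 < r * (1 - t * c)" using key c by linarith
      hence pos: "1 - t * c > 0" using cr c by (simp add: zero_less_mult_iff)
      show "y \<in> B2s"
      proof (rule ccontr)
        assume "y \<notin> B2s"
        hence le: "inv_norm_on S (F y) \<le> ereal c" unfolding B2s by (simp add: not_less)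
        have "inv_norm_on S (F \<theta>) \<le> ereal (c / (1 - t * c))"
          unfolding F_def t_def by (rule perturb_theta[OF S le[unfolded F_def]]) (use pos in \<open>simp add: t_def\<close>)
        also have "c / (1 - t * c) < r" using key pos by (simp add: pos_divide_less_eq)
        hence "ereal (c / (1 - t * c)) < ereal r" by simp
        finally have "inv_norm_on S (F \<theta>) < ereal r" .
        with r(2) show False by simp
      qed
    qed
  qed
  have meas: "B2s \<in> sets lborel" using opn by simp
  have "emeasure lborel B2s \<le> emeasure lborel {-R..R}"
  proof (rule emeasure_mono)
    show "B2s \<subseteq> {-R..R}"
    proof
      fix x assume "x \<in> B2s"
      hence "\<bar>x\<bar> \<le> R" by (rule bnd)
      thus "x \<in> {-R..R}" by (simp add: abs_le_iff)
    qed
  qed simp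
  also have "\<dots> < \<infinity>" using c0 c unfolding R_def by simp
  finally have fm: "B2s \<in> fmeasurable lborel" by (rule fmeasurableI[OF meas])
  define M where "M = measure lborel B2s"
  have M0: "M \<ge> 0" unfolding M_def by simp
  define cell where "cell k = {real_of_int k * h ..< (real_of_int k + 1) * h}" for k :: int
  have floor_cell: "\<lfloor>x / h\<rfloor> = k" if "x \<in> cell k" for x k
  proof -
    from that have "real_of_int k * h \<le> x" "x < (real_of_int k + 1) * h" unfolding cell_def by auto
    hence "real_of_int k \<le> x / h" "x / h < real_of_int k + 1" using h
      by (simp_all add: pos_le_divide_eq pos_divide_less_eq)
    thus ?thesis by (rule floor_unique)
  qed
  have in_cell: "x \<in> cell \<lfloor>x / h\<rfloor>" for x
  proof -
    have f1: "real_of_int \<lfloor>x / h\<rfloor> \<le> x / h" by simp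
    have f2: "x / h < real_of_int \<lfloor>x / h\<rfloor> + 1" by linarith
    have g1: "real_of_int \<lfloor>x / h\<rfloor> * h \<le> x" using f1 pos_le_divide_eq[OF h] by simp
    have g2: "x < (real_of_int \<lfloor>x / h\<rfloor> + 1) * h" by (rule pos_divide_less_eq[OF h, THEN iffD1, OF f2])
    show ?thesis unfolding cell_def using g1 g2 by simp
  qed
  define Ks where "Ks = (\<lambda>\<theta>. \<lfloor>\<theta> / h\<rfloor>) ` B0s"
  have Ksfin: "finite Ks"
  proof (rule finite_subset[OF _ finite_atLeastAtMost_int])
    show "Ks \<subseteq> {\<lfloor>-R / h\<rfloor> .. \<lfloor>R / h\<rfloor>}"
    proof
      fix k assume "k \<in> Ks"
      then obtain \<theta> where th: "\<theta> \<in> B0s" "k = \<lfloor>\<theta> / h\<rfloor>" unfolding Ks_def by blast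
      have "\<bar>\<theta>\<bar> \<le> R" using bnd sub th(1) by blast
      hence a: "-R \<le> \<theta>" "\<theta> \<le> R" using abs_le_iff[of \<theta> R] by linarith+
      have "-R / h \<le> \<theta> / h" by (rule divide_right_mono[OF a(1) less_imp_le[OF h]])
      moreover have "\<theta> / h \<le> R / h" by (rule divide_right_mono[OF a(2) less_imp_le[OF h]])
      ultimately have "-R / h \<le> \<theta> / h" "\<theta> / h \<le> R / h" by auto
      thus "k \<in> {\<lfloor>-R / h\<rfloor> .. \<lfloor>R / h\<rfloor>}" using th(2) by (auto intro: floor_mono)
    qed
  qed
  have cellsub: "cell k \<subseteq> B2s" if "k \<in> Ks" for k
  proof
    fix x assume x: "x \<in> cell k"
    from that obtain \<theta> where th: "\<theta> \<in> B0s" "k = \<lfloor>\<theta> / h\<rfloor>" unfolding Ks_def by blast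
    have "\<theta> \<in> cell k" using in_cell th(2) by simp
    with x have "\<bar>x - \<theta>\<bar> \<le> h" unfolding cell_def by (auto simp: algebra_simps abs_le_iff)
    thus "x \<in> B2s" by (rule near[OF th(1)])
  qed
  have ord: "real_of_int k * h \<le> (real_of_int k + 1) * h" for k using h by (simp add: algebra_simps)
  have disj: "disjoint_family_on cell Ks"
    unfolding disjoint_family_on_def using floor_cell by blast
  have "measure lborel (\<Union>k\<in>Ks. cell k) = (\<Sum>k\<in>Ks. measure lborel (cell k))"
    by (rule measure_finite_Union[OF Ksfin _ disj]) (auto simp: cell_def ord)
  also have "\<dots> = real (card Ks) * h" using h by (simp add: cell_def ord algebra_simps)
  finally have mU: "measure lborel (\<Union>k\<in>Ks. cell k) = real (card Ks) * h" .
  have "measure lborel (\<Union>k\<in>Ks. cell k) \<le> M" unfolding M_def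
    by (rule measure_mono_fmeasurable[OF _ _ fm]) (use cellsub in \<open>auto simp: cell_def\<close>)
  hence cardM: "real (card Ks) * h \<le> M" using mU by simp
  have "real (card Ks) = real (card Ks) * h * P" using hP by (simp add: mult.assoc)
  also have "\<dots> \<le> M * P" using cardM P by (simp add: mult_right_mono)
  also have "\<dots> \<le> 2 * M * P" using M0 P by simp
  finally have cardb: "real (card Ks) \<le> 2 * M * P" .
  define I where "I = map (\<lambda>k. (real_of_int k * h, (real_of_int k + 1) * h)) (sorted_list_of_set Ks)"
  have setI: "set I = (\<lambda>k. (real_of_int k * h, (real_of_int k + 1) * h)) ` Ks"
    unfolding I_def using Ksfin by simp
  have lenI: "length I = card Ks" unfolding I_def by simp
  have covI: "B0s \<subseteq> (\<Union>(a,b)\<in>set I. {a..b})"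
  proof
    fix \<theta> assume th: "\<theta> \<in> B0s"
    have k: "\<lfloor>\<theta> / h\<rfloor> \<in> Ks" unfolding Ks_def using th by blast
    have "\<theta> \<in> {real_of_int \<lfloor>\<theta> / h\<rfloor> * h .. (real_of_int \<lfloor>\<theta> / h\<rfloor> + 1) * h}"
      using in_cell[of \<theta>] unfolding cell_def by simp
    thus "\<theta> \<in> (\<Union>(a,b)\<in>set I. {a..b})" unfolding setI using k by blast
  qed
  have lengths: "\<forall>(a,b)\<in>set I. b - a \<le> real N powr (-\<tau>)"
    unfolding setI h_def[symmetric] by (auto simp: algebra_simps)
  show "let M = measure lborel (B02 \<tau> wbar V f (uplus \<epsilon> lam) N j0 \<epsilon> lam) in
      \<exists>I :: (real \<times> real) list.
         real (length I) \<le> 2 * M * real N powr \<tau> \<and>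
         (\<forall>(a,b)\<in>set I. b - a \<le> real N powr (-\<tau>)) \<and>
         B0 \<tau> wbar V f (uplus \<epsilon> lam) N j0 \<epsilon> lam \<subseteq> (\<Union>(a,b)\<in>set I. {a..b})"
    unfolding Let_def B2s_def[symmetric] B0s_def[symmetric] M_def[symmetric] P_def[symmetric]
    using lenI cardb lengths covI by (intro exI[of _ I]) simp
qed


end
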